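(* For every integer $r\ge 4$ and every positive integer $n$, $\mathrm{ex}(n,S_r,C_4)=\binom{n-1}{r-1}$.
   Context: $S_r$ denotes the star on $r$ vertices (one center joined to $r-1$ leaves), and $C_4$ the cycle on $4$ vertices. For graphs $H,G$, $\mathcal{N}(H,G)$ is the number of subgraphs of $G$ isomorphic to $H$, and $\mathrm{ex}(n,H,F)$ is the maximum of $\mathcal{N}(H,G)$ over $F$-free graphs $G$ on $n$ vertices. *)

theory Defs
  imports Main
begin

type_synonym 'a ugraph = "'a set \<times> 'a set set"

definition wf_graph :: "'a ugraph \<Rightarrow> bool" where
  "wf_graph G \<longleftrightarrow> finite (fst G) \<and> (\<forall>e\<in>snd G. e \<subseteq> fst G \<and> card e = 2)"

definition graph_iso :: "'a ugraph \<Rightarrow> 'b ugraph \<Rightarrow> bool" where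
  "graph_iso G H \<longleftrightarrow> (\<exists>f. bij_betw f (fst G) (fst H) \<and>
     (\<forall>u\<in>fst G. \<forall>v\<in>fst G. {u, v} \<in> snd G \<longleftrightarrow> {f u, f v} \<in> snd H))"

definition subgraphs :: "'a ugraph \<Rightarrow> 'a ugraph set" where
  "subgraphs G = {(V', E'). V' \<subseteq> fst G \<and> E' \<subseteq> snd G \<and> (\<forall>e\<in>E'. e \<subseteq> V')}"

definition count_sub :: "'b ugraph \<Rightarrow> 'a ugraph \<Rightarrow> nat" where
  "count_sub H G = card {S \<in> subgraphs G. graph_iso S H}"

definition star :: "nat \<Rightarrow> nat ugraph" where
  "star r = ({0..<r}, {{0, i} | i. 0 < i \<and> i < r})"

definition cycle4 :: "nat ugraph" where
  "cycle4 = ({0..<4}, {{0,1}, {1,2}, {2,3}, {3,0}})"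

text \<open>ex(n, H, F): maximum of N(H, G) over F-free graphs G on n vertices
(vertex set {0..<n}, which is no loss of generality up to isomorphism).\<close>
definition gen_ex :: "nat \<Rightarrow> 'b ugraph \<Rightarrow> 'c ugraph \<Rightarrow> nat" where
  "gen_ex n H F = Max {count_sub H G | G :: nat ugraph.
      wf_graph G \<and> fst G = {0..<n} \<and> count_sub F G = 0}"

end

theory Submission
  imports Defs
begin

lemma choose_Suc_le: "(m choose Suc i) \<le> m * (m choose i)"
proof -
  have "Suc i * (m choose Suc i) = m * ((m - 1) choose i)" by (rule binomial_absorption)
  also have "\<dots> \<le> m * (m choose i)" by (intro mult_le_mono2 binomial_right_mono) simp
  finally have a: "Suc i * (m choose Suc i) \<le> m * (m choose i)" .
  have "(m choose Suc i) \<le> Suc i * (m choose Suc i)" by simp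
  then show ?thesis using a by (rule le_trans)
qed

lemma choose_SS_ge: "2 * (m choose i) + (m choose Suc i) \<le> (Suc (Suc m) choose Suc i)"
  by (cases i) auto

lemma arithA:
  assumes "j \<ge> 1"
  shows "n * ((n - 5) choose j) \<le> (n - 2) * ((n - 3) choose j)"
proof (cases "n < 5")
  case True then show ?thesis using assms by (cases j) auto
next
  case False
  obtain m where n: "n = m + 5" using False by (metis add.commute le_Suc_ex not_less)
  obtain i where j: "j = Suc i" using assms by (cases j) auto
  have h1: "(m choose Suc i) \<le> m * (m choose i)" by (rule choose_Suc_le)
  have h2: "2 * (m choose i) + (m choose Suc i) \<le> (Suc (Suc m) choose Suc i)" by (rule choose_SS_ge)
  have "(m + 5) * (m choose Suc i) = (m+3) * (m choose Suc i) + 2 * (m choose Suc i)" by (simp add: algebra_simps)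
  also have "\<dots> \<le> (m+3) * (m choose Suc i) + (m+3) * (2 * (m choose i))"
    using le_trans[OF h1 mult_le_mono1[of m "m+3" "m choose i"]] by simp
  also have "\<dots> = (m+3) * (2 * (m choose i) + (m choose Suc i))" by (simp add: algebra_simps)
  also have "\<dots> \<le> (m+3) * (Suc (Suc m) choose Suc i)" using h2 by simp
  finally have fin: "(m + 5) * (m choose Suc i) \<le> (m+3) * (Suc (Suc m) choose Suc i)" .
  have e: "n - 5 = m" "n - 2 = m + 3" "n - 3 = Suc (Suc m)" "n = m + 5" using n by simp_all
  show ?thesis
    apply (subst e(1))
    apply (subst e(2))
    apply (subst e(3))
    apply (subst j)+
    apply (subst e(4))
    by (rule fin)
qed

lemma pair_bound:
  assumes fin: "finite V" and sub: "\<And>v. v\<in>V \<Longrightarrow> N v \<subseteq> V"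
    and c4: "\<And>a b. a\<in>V \<Longrightarrow> b\<in>V \<Longrightarrow> a\<noteq>b \<Longrightarrow> card (N a \<inter> N b) \<le> 1"
  shows "(\<Sum>v\<in>V. card (N v) choose 2) \<le> card V choose 2"
proof -
  let ?P = "SIGMA v:V. {T. T \<subseteq> N v \<and> card T = 2}"
  have finN: "finite (N v)" if "v \<in> V" for v using sub[OF that] fin finite_subset by blast
  have "card ?P = (\<Sum>v\<in>V. card {T. T \<subseteq> N v \<and> card T = 2})"
    using fin finN by (subst card_SigmaI) auto
  also have "\<dots> = (\<Sum>v\<in>V. card (N v) choose 2)"
    using finN by (intro sum.cong refl n_subsets) auto
  finally have cP: "card ?P = (\<Sum>v\<in>V. card (N v) choose 2)" .
  have inj: "inj_on snd ?P"
  proof (rule inj_onI)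
    fix x y assume x: "x \<in> ?P" and y: "y \<in> ?P" and e: "snd x = snd y"
    obtain a T where xa: "x = (a, T)" by (cases x)
    obtain b T' where yb: "y = (b, T')" by (cases y)
    have TT: "T' = T" using e xa yb by simp
    have a: "a \<in> V" "T \<subseteq> N a" "card T = 2" using x xa by auto
    have b: "b \<in> V" "T \<subseteq> N b" using y yb TT by auto
    show "x = y"
    proof (rule ccontr)
      assume "x \<noteq> y"
      then have "a \<noteq> b" using xa yb TT by simp
      then have "card (N a \<inter> N b) \<le> 1" using c4 a b by simp
      moreover have "card T \<le> card (N a \<inter> N b)"
        using a b finN by (intro card_mono) auto
      ultimately show False using a by simp
    qed
  qed
  have img: "snd ` ?P \<subseteq> {T. T \<subseteq> V \<and> card T = 2}" using sub by fastforce
  have "card ?P = card (snd ` ?P)" using inj by (simp add: card_image)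
  also have "\<dots> \<le> card {T. T \<subseteq> V \<and> card T = 2}"
    using img fin by (intro card_mono) auto
  also have "\<dots> = card V choose 2" using fin by (rule n_subsets)
  finally show ?thesis using cP by simp
qed

lemma two_choose2: "2 * (n choose 2) = n * (n - 1)"
  using binomial_absorption[of 1 n] by (simp add: numeral_2_eq_2)

lemma arithB:
  assumes "j \<ge> 1"
  shows "((n - 5) choose j) * (n choose 2) \<le> ((n - 1) choose 2) * ((n - 3) choose j)"
proof -
  have a: "n * ((n - 5) choose j) \<le> (n - 2) * ((n - 3) choose j)" using arithA[OF assms] .
  have e1: "n - 1 - 1 = n - 2" by simp
  have "2 * (((n - 5) choose j) * (n choose 2)) = ((n - 5) choose j) * (2 * (n choose 2))"
    by (simp only: mult.left_commute)
  also have "\<dots> = ((n - 5) choose j) * (n * (n - 1))" by (simp only: two_choose2)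
  also have "\<dots> = (n - 1) * (n * ((n - 5) choose j))" by (simp only: mult.commute mult.left_commute mult.assoc)
  also have "\<dots> \<le> (n - 1) * ((n - 2) * ((n - 3) choose j))" using a by simp
  also have "\<dots> = ((n - 1) * (n - 2)) * ((n - 3) choose j)" by (simp only: mult.assoc)
  also have "\<dots> = (2 * ((n - 1) choose 2)) * ((n - 3) choose j)" using two_choose2[of "n-1"] e1 by simp
  also have "\<dots> = 2 * (((n - 1) choose 2) * ((n - 3) choose j))" by (simp only: mult.assoc)
  finally show ?thesis by simp
qed

lemma choose_k2:
  assumes "2 \<le> k"
  shows "(k choose 2) * (d choose k) = (d choose 2) * ((d - 2) choose (k - 2))"
proof (cases "k \<le> d")
  case True
  then show ?thesis using choose_mult[of 2 k d] assms by (simp add: mult.commute)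
next
  case False
  then show ?thesis using assms by (cases "d < 2") (auto simp: binomial_eq_0)
qed

lemma card_ins_le: "finite A \<Longrightarrow> card (insert x A) \<le> Suc (card A)"
  by (simp add: card_insert_if)

lemma core:
  assumes fin: "finite V" and ne: "V \<noteq> {}" and sub: "\<And>v. v\<in>V \<Longrightarrow> N v \<subseteq> V"
    and irr: "\<And>v. v\<in>V \<Longrightarrow> v \<notin> N v"
    and sym: "\<And>v w. v\<in>V \<Longrightarrow> w\<in>V \<Longrightarrow> w \<in> N v \<Longrightarrow> v \<in> N w"
    and c4: "\<And>a b. a\<in>V \<Longrightarrow> b\<in>V \<Longrightarrow> a\<noteq>b \<Longrightarrow> card (N a \<inter> N b) \<le> 1"
    and k: "k \<ge> 3"
  shows "(\<Sum>v\<in>V. card (N v) choose k) \<le> (card V - 1) choose k"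
proof -
  define n where "n = card V"
  define D where "D = Max ((\<lambda>v. card (N v)) ` V)"
  have finN: "finite (N v)" if "v \<in> V" for v using sub[OF that] fin finite_subset by blast
  have "D \<in> (\<lambda>v. card (N v)) ` V" unfolding D_def using fin ne by (intro Max_in) auto
  then obtain u where u: "u \<in> V" "card (N u) = D" by auto
  have Dmax: "card (N v) \<le> D" if "v \<in> V" for v
    unfolding D_def using fin that by (intro Max_ge) auto
  have "card V > 0" using fin ne by (simp add: card_gt_0_iff)
  then have n1: "n \<ge> 1" unfolding n_def by linarith
  have Nu_sub: "N u \<subseteq> V - {u}" using sub[OF u(1)] irr[OF u(1)] by auto
  have cVu: "card (V - {u}) = n - 1" using u(1) fin n_def by simp
  have "card (N u) \<le> card (V - {u})" using fin by (intro card_mono[OF _ Nu_sub]) blast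
  then have Dle: "D \<le> n - 1" using u(2) cVu by linarith
  have split: "(\<Sum>v\<in>V. card (N v) choose k) = (D choose k) + (\<Sum>v\<in>V-{u}. card (N v) choose k)"
    using sum.remove[OF fin u(1), of "\<lambda>v. card (N v) choose k"] u(2) by simp
  have small: "card (N v) choose k = 0" if "card (N v) \<le> 2" for v
    using that k by (intro binomial_eq_0) linarith
  consider "D = n - 1" | "D + 2 = n" | "D + 3 \<le> n" using Dle n1 by linarith
  then show ?thesis
  proof cases
    case 1
    have NuV: "N u = V - {u}"
    proof (rule card_subset_eq[OF _ Nu_sub])
      show "finite (V - {u})" using fin by blast
      show "card (N u) = card (V - {u})" using cVu 1 u(2) by simp
    qed
    have "card (N v) choose k = 0" if v: "v \<in> V - {u}" for v
    proof -
      have "N v \<subseteq> insert u (N v \<inter> N u)"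
      proof
        fix x assume x: "x \<in> N v"
        then have "x \<in> V" using sub v by blast
        then show "x \<in> insert u (N v \<inter> N u)" using x NuV by blast
      qed
      then have "card (N v) \<le> card (insert u (N v \<inter> N u))"
        using finN v by (intro card_mono) auto
      also have "\<dots> \<le> Suc (card (N v \<inter> N u))" using finN v by (intro card_ins_le) auto
      also have "\<dots> \<le> 2" using c4[of v u] v u(1) by auto
      finally show ?thesis by (rule small)
    qed
    then have "(\<Sum>v\<in>V-{u}. card (N v) choose k) = 0" by (intro sum.neutral) blast
    then show ?thesis using split 1 n_def by simp
  next
    case 2
    have c1: "card (V - {u} - N u) = 1"
      using card_Diff_subset[OF _ Nu_sub] finN[OF u(1)] cVu u(2) 2 by simp
    then obtain w where w: "V - {u} - N u = {w}" by (rule card_1_singletonE)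
    have wV: "w \<in> V" "w \<noteq> u" "w \<notin> N u" using w by auto
    have Nw: "card (N w) \<le> 1"
    proof -
      have "N w \<subseteq> N w \<inter> N u"
      proof
        fix x assume x: "x \<in> N w"
        have "x \<in> V" "x \<noteq> w" using x sub[OF wV(1)] irr[OF wV(1)] by auto
        moreover have "x \<noteq> u" using x sym[OF wV(1) u(1)] wV by auto
        ultimately show "x \<in> N w \<inter> N u" using x w by auto
      qed
      then have "card (N w) \<le> card (N w \<inter> N u)" using finN wV by (intro card_mono) auto
      also have "\<dots> \<le> 1" using c4[of w u] wV u by simp
      finally show ?thesis .
    qed
    have pos: "v \<in> N w \<and> card (N v) \<le> 3" if v: "v \<in> V - {u}" "card (N v) choose k \<noteq> 0" for v
    proof -
      have "N v \<subseteq> insert u (insert w (N v \<inter> N u))" using sub v w by auto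
      then have "card (N v) \<le> card (insert u (insert w (N v \<inter> N u)))"
        using finN v by (intro card_mono) auto
      also have "\<dots> \<le> Suc (Suc (card (N v \<inter> N u)))"
        using finN[of v] v card_ins_le[of "insert w (N v \<inter> N u)" u] card_ins_le[of "N v \<inter> N u" w] by auto
      also have "\<dots> \<le> 3" using c4[of v u] v u by simp
      finally have d3: "card (N v) \<le> 3" .
      have "w \<in> N v"
      proof (rule ccontr)
        assume nw: "w \<notin> N v"
        have "N v \<subseteq> insert u (N v \<inter> N u)"
        proof
          fix x assume x: "x \<in> N v"
          then have "x \<in> V" using sub v by auto
          moreover have "x \<noteq> w" using x nw by auto
          ultimately show "x \<in> insert u (N v \<inter> N u)" using x w by blast
        qed
        then have "card (N v) \<le> card (insert u (N v \<inter> N u))"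
          using finN v by (intro card_mono) auto
        also have "\<dots> \<le> Suc (card (N v \<inter> N u))" using finN v by (intro card_ins_le) auto
        also have "\<dots> \<le> 2" using c4[of v u] v u by simp
        finally have "card (N v) choose k = 0" by (rule small)
        with v show False by simp
      qed
      then show ?thesis using sym[of v w] v wV d3 by auto
    qed
    define S where "S = (\<Sum>v\<in>V-{u}. card (N v) choose k)"
    have S_eq: "S = (\<Sum>v\<in>(V-{u}) \<inter> N w. card (N v) choose k)"
      unfolding S_def using fin pos by (intro sum.mono_neutral_right) auto
    have term1: "card (N v) choose k \<le> 1" if "v \<in> (V-{u}) \<inter> N w" for v
    proof (cases "card (N v) choose k = 0")
      case False
      then have "card (N v) \<le> 3" using pos that by auto
      then have "card (N v) choose k \<le> 3 choose k" by (rule binomial_right_mono)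
      also have "\<dots> \<le> 1" using k by (cases "k = 3") (auto simp: binomial_eq_0)
      finally show ?thesis .
    qed (simp add: binomial_eq_0)
    have "S \<le> card ((V-{u}) \<inter> N w) * 1"
      unfolding S_eq using sum_bounded_above[of "(V-{u}) \<inter> N w" "\<lambda>v. card (N v) choose k" 1] term1 by simp
    also have "\<dots> \<le> card (N w)" using finN wV by (simp add: card_mono)
    finally have S1: "S \<le> 1" using Nw by simp
    have SD: "S \<le> D choose (k - 1)"
    proof (cases "S = 0")
      case False
      then obtain v where v: "v \<in> V - {u}" "card (N v) choose k \<noteq> 0"
        unfolding S_def by (meson sum.not_neutral_contains_not_neutral)
      have "k \<le> card (N v)" using v(2) by (simp add: binomial_eq_0_iff)
      then have "k - 1 \<le> D" using Dmax v(1) by force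
      then have "0 < D choose (k - 1)" by (rule zero_less_binomial)
      then show ?thesis using S1 by linarith
    next
      case True then show ?thesis by simp
    qed
    have "n - 1 = Suc D" using 2 by simp
    moreover have "Suc D choose k = (D choose k) + (D choose (k - 1))"
      using k by (cases k) auto
    ultimately show ?thesis using split SD S_def n_def by simp
  next
    case 3
    have k2: "2 \<le> k" "1 \<le> k - 2" using k by auto
    have "(k choose 2) * (\<Sum>v\<in>V. card (N v) choose k)
          = (\<Sum>v\<in>V. (card (N v) choose 2) * ((card (N v) - 2) choose (k - 2)))"
      by (simp add: sum_distrib_left choose_k2[OF k2(1)])
    also have "\<dots> \<le> (\<Sum>v\<in>V. (card (N v) choose 2) * ((D - 2) choose (k - 2)))"
      using Dmax by (intro sum_mono mult_le_mono2 binomial_right_mono) (simp add: diff_le_mono)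
    also have "\<dots> = ((D - 2) choose (k - 2)) * (\<Sum>v\<in>V. card (N v) choose 2)"
      unfolding sum_distrib_left by (simp add: mult.commute)
    also have "\<dots> \<le> ((D - 2) choose (k - 2)) * (n choose 2)"
      using pair_bound[of V N] fin sub c4 n_def by simp
    also have "\<dots> \<le> ((n - 5) choose (k - 2)) * (n choose 2)"
      using 3 by (intro mult_le_mono1 binomial_right_mono) simp
    also have "\<dots> \<le> ((n - 1) choose 2) * ((n - 3) choose (k - 2))"
      using arithB[OF k2(2)] .
    also have "\<dots> = (k choose 2) * ((n - 1) choose k)"
      using choose_k2[OF k2(1), of "n - 1"] by (simp add: numeral_eq_Suc)
    finally have "(k choose 2) * (\<Sum>v\<in>V. card (N v) choose k) \<le> (k choose 2) * ((n - 1) choose k)" .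
    moreover have "0 < k choose 2" using k2 by (simp add: zero_less_binomial)
    ultimately have "(\<Sum>v\<in>V. card (N v) choose k) \<le> (n - 1) choose k"
      by (simp only: mult_le_cancel1)
    then show ?thesis unfolding n_def .
  qed
qed

definition nb :: "'a ugraph \<Rightarrow> 'a \<Rightarrow> 'a set" where
  "nb G v = {w \<in> fst G. {v, w} \<in> snd G}"

lemma nb_sub: "nb G v \<subseteq> fst G" unfolding nb_def by auto

lemma nb_irr: "wf_graph G \<Longrightarrow> v \<notin> nb G v"
  unfolding nb_def wf_graph_def by auto

lemma nb_sym: "w \<in> nb G v \<Longrightarrow> v \<in> fst G \<Longrightarrow> v \<in> nb G w"
  unfolding nb_def by (auto simp: insert_commute)

lemma finite_subgraphs:
  assumes "wf_graph G" shows "finite (subgraphs G)"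
proof -
  have fV: "finite (fst G)" using assms unfolding wf_graph_def by auto
  have "snd G \<subseteq> Pow (fst G)" using assms unfolding wf_graph_def by auto
  then have fE: "finite (snd G)" using fV finite_subset by blast
  have "subgraphs G \<subseteq> Pow (fst G) \<times> Pow (snd G)" unfolding subgraphs_def by auto
  then show ?thesis using fV fE finite_subset by blast
qed

lemma iso_by_inj:
  assumes inj: "inj_on f V" and E: "\<forall>e\<in>E. e \<subseteq> V" and u: "u \<in> V" and v: "v \<in> V"
  shows "{u, v} \<in> E \<longleftrightarrow> {f u, f v} \<in> (\<lambda>e. f ` e) ` E"
proof
  assume h: "{u, v} \<in> E"
  have "{f u, f v} = f ` {u, v}" by simp
  then show "{f u, f v} \<in> (\<lambda>e. f ` e) ` E" using h by (simp only: image_eqI)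
next
  assume "{f u, f v} \<in> (\<lambda>e. f ` e) ` E"
  then obtain e where e: "e \<in> E" "{f u, f v} = f ` e" by (rule imageE)
  have fe: "f ` {u, v} = f ` e" using e(2) by simp
  have s1: "{u, v} \<subseteq> V" using u v by simp
  have s2: "e \<subseteq> V" using E e(1) by blast
  have "{u, v} = e" using iffD1[OF inj_on_image_eq_iff[OF inj s1 s2] fe] .
  then show "{u, v} \<in> E" using e(1) by simp
qed

lemma c4_iso:
  assumes d: "a \<noteq> x" "a \<noteq> b" "a \<noteq> y" "x \<noteq> b" "x \<noteq> y" "b \<noteq> y"
  shows "graph_iso ({a,x,b,y}, {{a,x},{x,b},{b,y},{y,a}}) cycle4"
proof -
  define f where "f = (\<lambda>z. if z = a then 0 else if z = x then 1 else if z = b then 2 else (3::nat))"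
  have fv: "f a = 0" "f x = 1" "f b = 2" "f y = 3" unfolding f_def using d by auto
  have inj: "inj_on f {a,x,b,y}"
  proof (rule inj_onI)
    fix p q assume p: "p \<in> {a,x,b,y}" and q: "q \<in> {a,x,b,y}" and e: "f p = f q"
    from p q e show "p = q" using fv by (elim insertE emptyE) simp_all
  qed
  have r4: "{0..<4::nat} = {0,1,2,3}" by auto
  have img: "f ` {a,x,b,y} = {0..<4}" unfolding r4 using fv by simp
  have bij: "bij_betw f {a,x,b,y} {0..<4}" unfolding bij_betw_def using inj img by simp
  have Eimg: "(\<lambda>e. f ` e) ` {{a,x},{x,b},{b,y},{y,a}} = {{0,1},{1,2},{2,3},{3,0::nat}}"
    using fv by simp
  have "\<forall>u\<in>{a,x,b,y}. \<forall>v\<in>{a,x,b,y}.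
     ({u, v} \<in> {{a,x},{x,b},{b,y},{y,a}} \<longleftrightarrow> {f u, f v} \<in> {{0,1},{1,2},{2,3},{3,0::nat}})"
  proof (intro ballI)
    fix u v assume uv: "u \<in> {a,x,b,y}" "v \<in> {a,x,b,y}"
    have Es: "\<forall>e\<in>{{a,x},{x,b},{b,y},{y,a}}. e \<subseteq> {a,x,b,y}" by auto
    from iso_by_inj[OF inj Es uv, unfolded Eimg]
    show "{u, v} \<in> {{a,x},{x,b},{b,y},{y,a}} \<longleftrightarrow> {f u, f v} \<in> {{0,1},{1,2},{2,3},{3,0::nat}}" .
  qed
  note edges = this
  show ?thesis unfolding graph_iso_def cycle4_def fst_conv snd_conv
    by (intro exI[of _ f] conjI bij edges)
qed

lemma c4_free_nb:
  assumes wf: "wf_graph G" and c0: "count_sub cycle4 G = 0"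
    and a: "a \<in> fst G" and b: "b \<in> fst G" and ab: "a \<noteq> b"
  shows "card (nb G a \<inter> nb G b) \<le> 1"
proof (rule ccontr)
  assume neg: "\<not> card (nb G a \<inter> nb G b) \<le> 1"
  have fV: "finite (fst G)" using wf unfolding wf_graph_def by auto
  have "finite (nb G a \<inter> nb G b)" using fV nb_sub finite_subset by (metis finite_Int)
  then obtain x y where xy: "x \<in> nb G a \<inter> nb G b" "y \<in> nb G a \<inter> nb G b" "x \<noteq> y"
    using neg card_le_Suc0_iff_eq[of "nb G a \<inter> nb G b"] by auto
  have ax: "a \<noteq> x" "a \<noteq> y" "b \<noteq> x" "b \<noteq> y" using xy nb_irr[OF wf] by auto
  have E0: "{a,x} \<in> snd G" "{b,x} \<in> snd G" "{b,y} \<in> snd G" "{a,y} \<in> snd G"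
    using xy unfolding nb_def by auto
  have E: "{a,x} \<in> snd G" "{x,b} \<in> snd G" "{b,y} \<in> snd G" "{y,a} \<in> snd G"
    using E0 insert_commute[of x b "{}"] insert_commute[of y a "{}"] by simp_all
  have V: "x \<in> fst G" "y \<in> fst G" using xy unfolding nb_def by auto
  let ?S = "({a,x,b,y}, {{a,x},{x,b},{b,y},{y,a}})"
  have "?S \<in> subgraphs G" unfolding subgraphs_def using E V a b by simp
  moreover have "graph_iso ?S cycle4" using ax ab xy(3) by (intro c4_iso) simp_all
  ultimately have mem: "?S \<in> {S \<in> subgraphs G. graph_iso S cycle4}" by blast
  have "finite {S \<in> subgraphs G. graph_iso S cycle4}"
    using finite_subgraphs[OF wf] by simp
  then have "card {S \<in> subgraphs G. graph_iso S cycle4} > 0"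
    using mem card_gt_0_iff by blast
  then show False using c0 unfolding count_sub_def by simp
qed

lemma doubleton_zero: "{x, y} = {0::nat, i} \<Longrightarrow> x = 0 \<or> y = 0"
  by (auto simp: doubleton_eq_iff)

lemma star_count_le:
  assumes wf: "wf_graph G" and r: "r \<ge> 1"
  shows "count_sub (star r) G \<le> (\<Sum>v\<in>fst G. card (nb G v) choose (r - 1))"
proof -
  have fV: "finite (fst G)" using wf unfolding wf_graph_def by simp
  have finN: "finite (nb G v)" for v using fV nb_sub finite_subset by metis
  let ?P = "SIGMA v:fst G. {T. T \<subseteq> nb G v \<and> card T = r - 1}"
  define g where "g = (\<lambda>(c::'a, T). (insert c T, (\<lambda>t. {c,t}) ` T))"
  have finP: "finite ?P" using fV finN by (intro finite_SigmaI) auto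
  have "card ?P = (\<Sum>v\<in>fst G. card {T. T \<subseteq> nb G v \<and> card T = r - 1})"
    using fV finN by (subst card_SigmaI) auto
  also have "\<dots> = (\<Sum>v\<in>fst G. card (nb G v) choose (r - 1))"
    using finN by (intro sum.cong refl n_subsets) auto
  finally have cP: "card ?P = (\<Sum>v\<in>fst G. card (nb G v) choose (r - 1))" .
  have sub: "{S \<in> subgraphs G. graph_iso S (star r)} \<subseteq> g ` ?P"
  proof
    fix S assume S: "S \<in> {S \<in> subgraphs G. graph_iso S (star r)}"
    obtain V' E' where SV: "S = (V', E')" by (cases S)
    have sg: "V' \<subseteq> fst G" "E' \<subseteq> snd G" "\<forall>e\<in>E'. e \<subseteq> V'"
      using S SV unfolding subgraphs_def by auto
    have "graph_iso (V', E') (star r)" using S SV by simp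
    then obtain f where bij: "bij_betw f V' {0..<r}"
      and ed: "\<forall>u\<in>V'. \<forall>v\<in>V'. {u,v} \<in> E' \<longleftrightarrow> {f u, f v} \<in> {{0,i} |i. 0 < i \<and> i < r}"
      unfolding graph_iso_def star_def fst_conv snd_conv by blast
    have inj: "inj_on f V'" using bij by (simp add: bij_betw_def)
    have img: "f ` V' = {0..<r}" using bij by (simp add: bij_betw_def)
    have "(0::nat) \<in> f ` V'" using img r by simp
    then obtain c where c: "c \<in> V'" "f c = 0" by (metis imageE)
    define T where "T = V' - {c}"
    have fr: "f v < r" if "v \<in> V'" for v
    proof -
      have "f v \<in> f ` V'" using that by (rule imageI)
      then show ?thesis using img by simp
    qed
    have fT: "f t \<noteq> 0" if t: "t \<in> T" for t
    proof
      assume "f t = 0"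
      then have "f t = f c" using c(2) by simp
      moreover have "t \<in> V'" "t \<noteq> c" using t unfolding T_def by auto
      ultimately show False using inj_onD[OF inj _ _ c(1)] by blast
    qed
    have finV': "finite V'" using sg(1) fV finite_subset by blast
    have "card V' = r" using bij_betw_same_card[OF bij] by simp
    then have cardT: "card T = r - 1" unfolding T_def using c(1) finV' by simp
    have TE: "{c,t} \<in> E'" if t: "t \<in> T" for t
    proof -
      have tV: "t \<in> V'" using t unfolding T_def by simp
      have pos: "0 < f t" "f t < r" using fT[OF t] fr[OF tV] by auto
      have "{f c, f t} \<in> {{0,i} |i. 0 < i \<and> i < r}"
        unfolding c(2) using pos by blast
      then show ?thesis using ed[rule_format, OF c(1) tV] by simp
    qed
    have ET: "e \<in> (\<lambda>t. {c,t}) ` T" if e: "e \<in> E'" for e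
    proof -
      have "e \<in> snd G" using e sg(2) by blast
      then have "card e = 2" using wf unfolding wf_graph_def by blast
      then obtain p q where pq: "e = {p,q}" "p \<noteq> q" by (meson card_2_iff)
      have pV: "p \<in> V'" "q \<in> V'" using sg(3) e pq(1) by auto
      have "{p, q} \<in> E'" using e pq(1) by simp
      then have "{f p, f q} \<in> {{0,i} |i. 0 < i \<and> i < r}" using ed[rule_format, OF pV] by simp
      then obtain i where "{f p, f q} = {0, i}" by blast
      then have "f p = 0 \<or> f q = 0" by (rule doubleton_zero)
      then show ?thesis
      proof
        assume "f p = 0"
        then have "p = c" using inj_onD[OF inj _ pV(1) c(1)] c(2) by simp
        then have "q \<in> T" using pq pV unfolding T_def by auto
        then show ?thesis using pq \<open>p = c\<close> by blast
      next
        assume "f q = 0"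
        then have "q = c" using inj_onD[OF inj _ pV(2) c(1)] c(2) by simp
        then have "p \<in> T" using pq pV unfolding T_def by auto
        moreover have "e = {c, p}" using pq \<open>q = c\<close> by (simp add: insert_commute)
        ultimately show ?thesis by blast
      qed
    qed
    have E'eq: "E' = (\<lambda>t. {c,t}) ` T" using TE ET by blast
    have V'eq: "V' = insert c T" unfolding T_def using c(1) by blast
    have Tsub: "T \<subseteq> nb G c"
    proof
      fix t assume t: "t \<in> T"
      have "t \<in> fst G" using t sg(1) unfolding T_def by blast
      moreover have "{c,t} \<in> snd G" using TE[OF t] sg(2) by blast
      ultimately show "t \<in> nb G c" unfolding nb_def by simp
    qed
    have "(c, T) \<in> ?P" using c(1) sg(1) Tsub cardT by blast
    moreover have "S = g (c, T)" unfolding g_def using SV E'eq V'eq by simp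
    ultimately show "S \<in> g ` ?P" by blast
  qed
  have "count_sub (star r) G \<le> card (g ` ?P)"
    unfolding count_sub_def using finP sub by (intro card_mono) auto
  also have "\<dots> \<le> card ?P" using finP by (rule card_image_le)
  finally show ?thesis using cP by simp
qed

lemma wf_star: "wf_graph (star n)"
  unfolding wf_graph_def star_def by auto

lemma star_c4_free: "count_sub cycle4 (star n) = 0"
proof -
  have emp: "{S \<in> subgraphs (star n). graph_iso S cycle4} = {}"
  proof (rule ccontr)
    assume "{S \<in> subgraphs (star n). graph_iso S cycle4} \<noteq> {}"
    then obtain V' E' where sg: "(V', E') \<in> subgraphs (star n)" and iso: "graph_iso (V', E') cycle4"
      by auto
    have Esub: "E' \<subseteq> {{0, i} |i. 0 < i \<and> i < n}" using sg unfolding subgraphs_def star_def by auto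
    obtain f where bij: "bij_betw f V' {0..<4}"
      and ed: "\<forall>u\<in>V'. \<forall>v\<in>V'. {u,v} \<in> E' \<longleftrightarrow> {f u, f v} \<in> {{0,1},{1,2},{2,3},{3,0::nat}}"
      using iso unfolding graph_iso_def cycle4_def fst_conv snd_conv by blast
    have img: "f ` V' = {0..<4}" using bij by (simp add: bij_betw_def)
    define a where "a = inv_into V' f"
    have aV: "a i \<in> V'" and fa: "f (a i) = i" if "i < 4" for i
    proof -
      have "i \<in> f ` V'" using img that by simp
      then show "a i \<in> V'" "f (a i) = i" unfolding a_def by (auto intro: inv_into_into f_inv_into_f)
    qed
    have e01: "{a 0, a 1} \<in> E'"
      using ed[rule_format, OF aV[of 0] aV[of 1]] fa[of 0] fa[of 1] by simp
    have e23: "{a 2, a 3} \<in> E'"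
      using ed[rule_format, OF aV[of 2] aV[of 3]] fa[of 2] fa[of 3] by simp
    obtain i where "{a 0, a 1} = {0, i}" using e01 Esub by blast
    then have z1: "a 0 = 0 \<or> a 1 = 0" by (rule doubleton_zero)
    obtain j where "{a 2, a 3} = {0, j}" using e23 Esub by blast
    then have z2: "a 2 = 0 \<or> a 3 = 0" by (rule doubleton_zero)
    have "f (a 0) = 0" "f (a 1) = 1" "f (a 2) = 2" "f (a 3) = 3" using fa by simp_all
    then show False using z1 z2 by auto
  qed
  show ?thesis unfolding count_sub_def emp by simp
qed

lemma star_count_ge:
  assumes n: "n \<ge> 1" and r: "r \<ge> 1"
  shows "(n - 1) choose (r - 1) \<le> count_sub (star r) (star n)"
proof -
  let ?Q = "{T. T \<subseteq> {1..<n} \<and> card T = r - 1}"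
  define h where "h = (\<lambda>T. (insert (0::nat) T, (\<lambda>t. {0,t}) ` T))"
  have cQ: "card ?Q = (n - 1) choose (r - 1)" using n_subsets[of "{1..<n}" "r - 1"] by simp
  have inj: "inj_on h ?Q"
  proof (rule inj_onI)
    fix T1 T2 assume T1: "T1 \<in> ?Q" and T2: "T2 \<in> ?Q" and e: "h T1 = h T2"
    have "insert 0 T1 = insert 0 T2" using e unfolding h_def by simp
    then have "insert 0 T1 - {0} = insert 0 T2 - {0}" by simp
    moreover have "0 \<notin> T1" "0 \<notin> T2" using T1 T2 by auto
    ultimately show "T1 = T2" by simp
  qed
  have sub: "h ` ?Q \<subseteq> {S \<in> subgraphs (star n). graph_iso S (star r)}"
  proof
    fix S assume "S \<in> h ` ?Q"
    then obtain T where T: "T \<subseteq> {1..<n}" "card T = r - 1" and S: "S = h T" by blast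
    have finT: "finite T" using T(1) finite_subset by blast
    have T0: "0 \<notin> T" using T(1) by auto
    have Tn: "0 < t \<and> t < n" if "t \<in> T" for t using that T(1) by auto
    have E1: "(\<lambda>t. {0,t}) ` T \<subseteq> {{0, i} |i. 0 < i \<and> i < n}" using Tn by blast
    have V1: "insert 0 T \<subseteq> {0..<n}" using T(1) n by auto
    have sg: "S \<in> subgraphs (star n)"
      unfolding S h_def subgraphs_def star_def using E1 V1 by auto
    have "card T = card {1..<r}" using T(2) by simp
    then obtain b where b: "bij_betw b T {1..<r}"
      using finite_same_card_bij[OF finT] by blast
    define f where "f = (\<lambda>z. if z = 0 then 0 else b z)"
    have fT: "f t = b t" if "t \<in> T" for t using that T0 unfolding f_def by auto
    have bT: "b ` T = {1..<r}" using b by (simp add: bij_betw_def)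
    have fimgT: "f ` T = {1..<r}" using fT bT by (metis image_cong)
    have injT: "inj_on f T" using b fT by (metis bij_betw_def inj_on_cong)
    have inj: "inj_on f (insert 0 T)"
    proof -
      have "T - {0} = T" using T0 by simp
      moreover have "f 0 \<notin> f ` T" using fimgT unfolding f_def by simp
      ultimately show ?thesis using injT by (simp add: inj_on_insert)
    qed
    have img: "f ` insert 0 T = {0..<r}" using fimgT r unfolding f_def by auto
    have bij: "bij_betw f (insert 0 T) {0..<r}" using inj img by (simp add: bij_betw_def)
    have Eimg: "(\<lambda>e. f ` e) ` ((\<lambda>t. {0,t}) ` T) = {{0, i} |i. 0 < i \<and> i < r}"
    proof -
      have f0: "f 0 = 0" unfolding f_def by simp
      have "(\<lambda>e. f ` e) ` ((\<lambda>t. {0,t}) ` T) = (\<lambda>t. {0, f t}) ` T"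
        using f0 by (simp add: image_image)
      also have "\<dots> = (\<lambda>i. {0, i}) ` (f ` T)" by (simp add: image_image)
      also have "\<dots> = (\<lambda>i. {0, i}) ` {1..<r}" using fimgT by simp
      also have "\<dots> = {{0, i} |i. 0 < i \<and> i < r}" by auto
      finally show ?thesis .
    qed
    have Es: "\<forall>e\<in>(\<lambda>t. {0,t}) ` T. e \<subseteq> insert 0 T" by auto
    have edges: "\<forall>u\<in>insert 0 T. \<forall>v\<in>insert 0 T.
       ({u,v} \<in> (\<lambda>t. {0,t}) ` T \<longleftrightarrow> {f u, f v} \<in> {{0, i} |i. 0 < i \<and> i < r})"
    proof (intro ballI)
      fix u v assume uv: "u \<in> insert 0 T" "v \<in> insert 0 T"
      from iso_by_inj[OF inj Es uv, unfolded Eimg]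
      show "{u,v} \<in> (\<lambda>t. {0,t}) ` T \<longleftrightarrow> {f u, f v} \<in> {{0, i} |i. 0 < i \<and> i < r}" .
    qed
    have "graph_iso S (star r)"
      unfolding S h_def graph_iso_def star_def fst_conv snd_conv
      by (intro exI[of _ f] conjI bij edges)
    then show "S \<in> {S \<in> subgraphs (star n). graph_iso S (star r)}" using sg by simp
  qed
  have fin: "finite {S \<in> subgraphs (star n). graph_iso S (star r)}"
    using finite_subgraphs[OF wf_star] by simp
  have "card ?Q = card (h ` ?Q)" using inj by (simp add: card_image)
  also have "\<dots> \<le> count_sub (star r) (star n)"
    unfolding count_sub_def using fin sub by (rule card_mono)
  finally show ?thesis using cQ by simp
qed

theorem proposition3p2:
  fixes n r :: nat
  assumes "r \<ge> 4" and "n \<ge> 1"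
  shows "gen_ex n (star r) cycle4 = (n - 1) choose (r - 1)"
proof -
  let ?C = "(n - 1) choose (r - 1)"
  define M where "M = {count_sub (star r) G | G :: nat ugraph.
      wf_graph G \<and> fst G = {0..<n} \<and> count_sub cycle4 G = 0}"
  have upper: "count_sub (star r) G \<le> ?C"
    if G: "wf_graph G" "fst G = {0..<n}" "count_sub cycle4 G = 0" for G :: "nat ugraph"
  proof -
    have fin: "finite (fst G)" using G(2) by simp
    have ne: "fst G \<noteq> {}" using G(2) assms(2) by auto
    have s1: "\<And>v. v \<in> fst G \<Longrightarrow> nb G v \<subseteq> fst G" by (rule nb_sub)
    have s2: "\<And>v. v \<in> fst G \<Longrightarrow> v \<notin> nb G v" by (rule nb_irr[OF G(1)])
    have s3: "\<And>v w. v \<in> fst G \<Longrightarrow> w \<in> fst G \<Longrightarrow> w \<in> nb G v \<Longrightarrow> v \<in> nb G w"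
      by (rule nb_sym)
    have s4: "\<And>a b. a \<in> fst G \<Longrightarrow> b \<in> fst G \<Longrightarrow> a \<noteq> b \<Longrightarrow> card (nb G a \<inter> nb G b) \<le> 1"
      by (rule c4_free_nb[OF G(1) G(3)])
    have k3: "3 \<le> r - 1" using assms(1) by simp
    have "count_sub (star r) G \<le> (\<Sum>v\<in>fst G. card (nb G v) choose (r - 1))"
      using star_count_le[OF G(1)] assms(1) by simp
    also have "\<dots> \<le> (card (fst G) - 1) choose (r - 1)"
      using core[OF fin ne s1 s2 s3 s4 k3] .
    also have "\<dots> = ?C" using G(2) by simp
    finally show ?thesis .
  qed
  have sn: "wf_graph (star n)" "fst (star n) = {0..<n}" "count_sub cycle4 (star n) = 0"
    using wf_star star_c4_free by (auto simp: star_def)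
  have eq: "count_sub (star r) (star n) = ?C"
  proof (rule antisym)
    show "count_sub (star r) (star n) \<le> ?C" by (rule upper[OF sn])
    show "?C \<le> count_sub (star r) (star n)" using star_count_ge[OF assms(2), of r] assms(1) by simp
  qed
  have mem: "?C \<in> M" unfolding M_def
    by (intro CollectI exI[of _ "star n"]) (simp add: sn eq)
  have bnd: "\<forall>y\<in>M. y \<le> ?C" unfolding M_def using upper by blast
  have finM: "finite M" using bnd by (meson finite_nat_set_iff_bounded_le)
  have "Max M = ?C" using finM bnd mem by (intro Max_eqI) auto
  then show ?thesis unfolding gen_ex_def M_def .
qed

end
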